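(* Let $m, n_0, n_1$ be positive integers and $n(\lambda) = n_0 + n_1\lambda$. Suppose $x(\lambda) = x_0 + x_1\lambda$, $y(\lambda) = y_0 + y_1\lambda$, $z(\lambda) = z_0 + z_1\lambda$ are polynomials of degree $1$ with positive rational coefficients satisfying $$\frac{m}{n(\lambda)} = \frac{1}{x(\lambda)} + \frac{1}{y(\lambda)} + \frac{1}{z(\lambda)}$$ identically. Then $$x_1 = \frac{x_0 n_1}{n_0},\qquad y_1 = \frac{y_0 n_1}{n_0},\qquad z_1 = \frac{z_0 n_1}{n_0}.$$
   Context: $\lambda$ is an indeterminate; the equation is an identity of rational functions in $\lambda$. *)

theory Defs
  imports "HOL-Computational_Algebra.Polynomial" "HOL-Computational_Algebra.Fraction_Field"
begin

type_synonym ratfun = "rat poly fract"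

definition rf :: "rat poly \<Rightarrow> ratfun" where
  "rf p = Fract p 1"

end

theory Submission
  imports Defs
begin

lemma key:
  fixes m n0 n1 x0 x1 y0 y1 z0 z1 :: rat
  assumes "n0 > 0" "n1 > 0" "x1 > 0" "y1 > 0" "z1 > 0"
    and F: "\<And>t. m*((x0+x1*t)*(y0+y1*t)*(z0+z1*t)) = (n0+n1*t)*((y0+y1*t)*(z0+z1*t) + (x0+x1*t)*(z0+z1*t) + (x0+x1*t)*(y0+y1*t))"
  shows "x1 = x0 * n1 / n0"
proof -
  define r where "r = -x0/x1"
  have x0: "x0 = - x1 * r" using assms(3) by (simp add: r_def)
  have Nr: "n0 + n1*r = 0"
  proof (cases "y0 + y1*r = 0")
    case yz: True
    hence y0: "y0 = - y1 * r" by (simp add: algebra_simps)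
    show ?thesis
    proof (cases "z0 + z1*r = 0")
      case True
      hence z0: "z0 = - z1 * r" by (simp add: algebra_simps)
      define e where "e = x1*y1+y1*z1+z1*x1"
      define H where "H t = m*x1*y1*z1*(t-r) - (n0+n1*t)*e" for t
      have H0: "H t = 0" if "t \<noteq> r" for t
      proof -
        have "(t-r)^2 * H t = 0" using F[of t] unfolding H_def e_def x0 y0 z0
          by (simp add: algebra_simps power2_eq_square)
        thus ?thesis using that by simp
      qed
      have "H r = 2*H (r+1) - H (r+2)" unfolding H_def by (simp add: algebra_simps)
      hence "H r = 0" using H0[of "r+1"] H0[of "r+2"] by simp
      moreover have "e > 0" unfolding e_def using assms by (simp add: add_pos_pos)
      ultimately show ?thesis unfolding H_def by simp
    next
      case False
      define G where "G t = m*x1*y1*(t-r)*(z0+z1*t) - (n0+n1*t)*((x1+y1)*(z0+z1*t)+x1*y1*(t-r))" for t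
      have G0: "G t = 0" if "t \<noteq> r" for t
      proof -
        have "(t-r) * G t = 0" using F[of t] unfolding G_def x0 y0
          by (simp add: algebra_simps power2_eq_square)
        thus ?thesis using that by simp
      qed
      have "G r = 3*G (r+1) - 3*G (r+2) + G (r+3)" unfolding G_def by (simp add: algebra_simps)
      hence "G r = 0" using G0[of "r+1"] G0[of "r+2"] G0[of "r+3"] by simp
      thus ?thesis using False assms unfolding G_def by simp
    qed
  next
    case ynz: False
    show ?thesis
    proof (cases "z0 + z1*r = 0")
      case True
      hence z0: "z0 = - z1 * r" by (simp add: algebra_simps)
      define G where "G t = m*x1*z1*(t-r)*(y0+y1*t) - (n0+n1*t)*((x1+z1)*(y0+y1*t)+x1*z1*(t-r))" for t
      have G0: "G t = 0" if "t \<noteq> r" for t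
      proof -
        have "(t-r) * G t = 0" using F[of t] unfolding G_def x0 z0
          by (simp add: algebra_simps power2_eq_square)
        thus ?thesis using that by simp
      qed
      have "G r = 3*G (r+1) - 3*G (r+2) + G (r+3)" unfolding G_def by (simp add: algebra_simps)
      hence "G r = 0" using G0[of "r+1"] G0[of "r+2"] G0[of "r+3"] by simp
      thus ?thesis using ynz assms unfolding G_def by simp
    next
      case False
      have "(n0+n1*r)*((y0+y1*r)*(z0+z1*r)) = 0" using F[of r] unfolding x0 by simp
      thus ?thesis using False ynz by simp
    qed
  qed
  show ?thesis using Nr assms(1,3) unfolding r_def by (simp add: field_simps)
qed

lemma polyid:
  fixes m :: rat and N X Y Z :: "rat poly"
  assumes "N \<noteq> 0" "X \<noteq> 0" "Y \<noteq> 0" "Z \<noteq> 0"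
    and "rf [:m:] / rf N = 1 / rf X + 1 / rf Y + 1 / rf Z"
  shows "[:m:] * (X*Y*Z) = N * (Y*Z + X*Z + X*Y)"
proof -
  have "Fract [:m:] N = Fract (Y*Z + X*Z + X*Y) (X*Y*Z)"
    using assms unfolding rf_def by (simp add: One_fract_def add_fract algebra_simps)
  thus ?thesis using assms by (simp add: eq_fract algebra_simps)
qed


theorem lemma4:
  fixes m n0 n1 :: nat and x0 x1 y0 y1 z0 z1 :: rat
  assumes "m > 0" "n0 > 0" "n1 > 0"
    and "x0 > 0" "x1 > 0" "y0 > 0" "y1 > 0" "z0 > 0" "z1 > 0"
    and "rf [:of_nat m:] / rf [:of_nat n0, of_nat n1:]
         = 1 / rf [:x0, x1:] + 1 / rf [:y0, y1:] + 1 / rf [:z0, z1:]"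
  shows "x1 = x0 * of_nat n1 / of_nat n0 \<and> y1 = y0 * of_nat n1 / of_nat n0
         \<and> z1 = z0 * of_nat n1 / of_nat n0"
proof -
  have P: "[:of_nat m:] * ([:x0, x1:]*[:y0, y1:]*[:z0, z1:]) = [:of_nat n0, of_nat n1:] *
     ([:y0, y1:]*[:z0, z1:] + [:x0, x1:]*[:z0, z1:] + [:x0, x1:]*[:y0, y1:])"
    by (rule polyid) (use assms in auto)
  have F: "of_nat m*((x0+x1*t)*(y0+y1*t)*(z0+z1*t)) = (of_nat n0+of_nat n1*t)*((y0+y1*t)*(z0+z1*t) + (x0+x1*t)*(z0+z1*t) + (x0+x1*t)*(y0+y1*t))" for t
    using arg_cong[OF P, of "\<lambda>p. poly p t"] by (simp add: algebra_simps)
  have a: "x1 = x0 * of_nat n1 / of_nat n0"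
    by (rule key[of "of_nat n0" "of_nat n1" x1 y1 z1 "of_nat m" x0 y0 z0]) (use assms F in auto)
  have b: "y1 = y0 * of_nat n1 / of_nat n0"
    by (rule key[of "of_nat n0" "of_nat n1" y1 x1 z1 "of_nat m" y0 x0 z0]) (use assms F in \<open>auto simp: algebra_simps\<close>)
  have c: "z1 = z0 * of_nat n1 / of_nat n0"
    by (rule key[of "of_nat n0" "of_nat n1" z1 y1 x1 "of_nat m" z0 y0 x0]) (use assms F in \<open>auto simp: algebra_simps\<close>)
  show ?thesis using a b c by simp
qed

end
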